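(* Let $G = (V, E, b, c)$ be a weighted hypergraph and run procedure COVER on the stream of its edges. For every integer $r$, the edge collection $S(> r) = \{ e \in E \mid \exists v \in V \text{ with } \mathrm{eff}_\infty(v) > r \text{ and } \mathrm{eid}_\infty(v) = \mathrm{id}(e) \}$ satisfies \[ c(S(> r)) < b(V) / 2^{r-1}. \]
   Context: A weighted hypergraph $G = (V, E, b, c)$ has vertex set $V$, a multiset $E$ of non-empty edges $e \subseteq V$, benefits $b : V \to \mathbb{Q}_{>0}$ and costs $c : E \to \mathbb{Q}_{>0}$; $b(U) = \sum_{v \in U} b(v)$, $c(F) = \sum_{e \in F} c(e)$. Edges arrive in a stream $e_0, e_1, \dots$, and $\mathrm{id}(e)$ is a unique identifier of edge $e$. Procedure COVER maintains for each $v \in V$ a variable $\mathrm{eid}(v)$ (initially NULL) and an integer variable $\mathrm{eff}(v)$ (initially $-\infty$); $\mathrm{eff}_t(v)$ denotes its value just before $e_t$ is processed, and $\mathrm{eff}_\infty(v)$, $\mathrm{eid}_\infty(v)$ the values after the whole stream has been processed. For $T \subseteq e_t$ the level is $\mathrm{lev}_t(T) = \lceil \lg (b(T)/c(e_t)) \rceil$ ($\lg$ = base-2 logarithm), and $T$ is effective at time $t$ if $\mathrm{lev}_t(T) > \mathrm{eff}_t(v)$ for every $v \in T$ (the empty set is vacuously effective). When $e_t$ arrives, COVER computes an effective subset $T \subseteq e_t$ of largest benefit $b(T)$ (any such subset) and, for every $v \in T$, sets $\mathrm{eid}(v) \leftarrow \mathrm{id}(e_t)$ and $\mathrm{eff}(v)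 \leftarrow \mathrm{lev}_t(T)$. *)

theory Defs
  imports Complex_Main "HOL-Library.Extended_Real"
begin

text \<open>A weighted hypergraph: finite vertex set V, edge stream es (a list; the edge
  multiset E is the multiset of its entries), benefits b on vertices, costs c indexed by
  stream position. The identifier of the edge e_t is its position t.\<close>

definition weighted_hypergraph ::
  "'v set \<Rightarrow> 'v set list \<Rightarrow> ('v \<Rightarrow> rat) \<Rightarrow> (nat \<Rightarrow> rat) \<Rightarrow> bool" where
  "weighted_hypergraph V es b c \<longleftrightarrow> finite V \<and> V \<noteq> {} \<and>
     (\<forall>t<length es. es ! t \<noteq> {} \<and> es ! t \<subseteq> V \<and> c t > 0) \<and>
     (\<forall>v\<in>V. b v > 0)"

text \<open>State of COVER: (eid, eff); eid v = None means NULL, eff v = -\<infinity> initially.\<close>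
type_synonym 'v cover_state = "('v \<Rightarrow> nat option) \<times> ('v \<Rightarrow> ereal)"

definition cover_init :: "'v cover_state" where
  "cover_init = ((\<lambda>_. None), (\<lambda>_. -\<infinity>))"

definition lev :: "('v \<Rightarrow> rat) \<Rightarrow> (nat \<Rightarrow> rat) \<Rightarrow> nat \<Rightarrow> 'v set \<Rightarrow> int" where
  "lev b c t T = \<lceil>log 2 (real_of_rat (sum b T / c t))\<rceil>"

definition effective ::
  "('v \<Rightarrow> rat) \<Rightarrow> (nat \<Rightarrow> rat) \<Rightarrow> nat \<Rightarrow> ('v \<Rightarrow> ereal) \<Rightarrow> 'v set \<Rightarrow> bool" where
  "effective b c t eff T \<longleftrightarrow> (\<forall>v\<in>T. ereal (real_of_int (lev b c t T)) > eff v)"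

definition cover_step ::
  "('v \<Rightarrow> rat) \<Rightarrow> (nat \<Rightarrow> rat) \<Rightarrow> 'v set list \<Rightarrow> nat \<Rightarrow> 'v cover_state \<Rightarrow> 'v cover_state \<Rightarrow> bool" where
  "cover_step b c es t s s' \<longleftrightarrow>
     (\<exists>T. T \<subseteq> es ! t \<and> effective b c t (snd s) T \<and>
        (\<forall>T'. T' \<subseteq> es ! t \<and> effective b c t (snd s) T' \<longrightarrow> sum b T' \<le> sum b T) \<and>
        s' = ((\<lambda>v. if v \<in> T then Some t else fst s v),
              (\<lambda>v. if v \<in> T then ereal (real_of_int (lev b c t T)) else snd s v)))"

text \<open>st t is the state just before e_t is processed; st (length es) is the final state.\<close>
definition cover_run ::
  "('v \<Rightarrow> rat) \<Rightarrow> (nat \<Rightarrow> rat) \<Rightarrow> 'v set list \<Rightarrow> (nat \<Rightarrow> 'v cover_state) \<Rightarrow> bool" where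
  "cover_run b c es st \<longleftrightarrow> st 0 = cover_init \<and>
     (\<forall>t<length es. cover_step b c es t (st t) (st (Suc t)))"

definition S_gt ::
  "'v set \<Rightarrow> 'v set list \<Rightarrow> 'v cover_state \<Rightarrow> int \<Rightarrow> nat set" where
  "S_gt V es fin r = {t. t < length es \<and>
     (\<exists>v\<in>V. snd fin v > ereal (real_of_int r) \<and> fst fin v = Some t)}"

end

theory Submission
  imports Defs
begin

lemma geom_le2:
  fixes K :: "nat set"
  assumes "finite K"
  shows "(\<Sum>k\<in>K. (1/2::real)^k) \<le> 2"
proof -
  obtain N where N: "K \<subseteq> {..<N}"
    using assms by (meson finite_nat_iff_bounded)
  have "(\<Sum>k\<in>K. (1/2::real)^k) \<le> (\<Sum>k<N. (1/2::real)^k)"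
    using N by (intro sum_mono2) auto
  also have "\<dots> \<le> 2"
  proof (induction N)
    case 0 then show ?case by simp
  next
    case (Suc N)
    have "(\<Sum>k<N. (1/2::real)^k) = 2 - 2 * (1/2)^N"
      by (induction N) (auto simp: field_simps)
    then show ?case by simp
  qed
  finally show ?thesis .
qed

lemma lev_bound:
  fixes B C :: real and L :: int
  assumes "B > 0" "C > 0" "L = \<lceil>log 2 (B / C)\<rceil>"
  shows "C * 2 powr (real_of_int L - 1) < B"
proof -
  have "real_of_int L - 1 < log 2 (B / C)" using assms(3) by linarith
  then have "2 powr (real_of_int L - 1) < 2 powr (log 2 (B / C))"
    by (intro powr_less_mono) auto
  also have "\<dots> = B / C" using assms by simp
  finally show ?thesis using assms by (simp add: field_simps)
qed

theorem corollary10: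
  fixes V :: "'v set" and es :: "'v set list" and b :: "'v \<Rightarrow> rat" and c :: "nat \<Rightarrow> rat"
    and st :: "nat \<Rightarrow> 'v cover_state" and r :: int
  assumes "weighted_hypergraph V es b c"
    and "cover_run b c es st"
  shows "real_of_rat (\<Sum>t\<in>S_gt V es (st (length es)) r. c t)
           < real_of_rat (sum b V) / 2 powr (real_of_int r - 1)"
proof -
  define n where "n = length es"
  have finV: "finite V" and Vne: "V \<noteq> {}" and edges: "\<And>t. t < n \<Longrightarrow> es ! t \<subseteq> V \<and> c t > 0"
    and bpos: "\<And>v. v \<in> V \<Longrightarrow> b v > 0"
    using assms(1) unfolding weighted_hypergraph_def n_def by auto
  have st0: "st 0 = cover_init" and steps: "\<And>t. t < n \<Longrightarrow> cover_step b c es t (st t) (st (Suc t))"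
    using assms(2) unfolding cover_run_def n_def by auto
  define P where "P t T \<longleftrightarrow> T \<subseteq> es ! t \<and> effective b c t (snd (st t)) T \<and>
        st (Suc t) = ((\<lambda>v. if v \<in> T then Some t else fst (st t) v),
              (\<lambda>v. if v \<in> T then ereal (real_of_int (lev b c t T)) else snd (st t) v))" for t T
  have ex: "\<exists>T. t < n \<longrightarrow> P t T" for t
  proof (cases "t < n")
    case True
    from steps[OF True] obtain T where "T \<subseteq> es ! t" "effective b c t (snd (st t)) T"
      "st (Suc t) = ((\<lambda>v. if v \<in> T then Some t else fst (st t) v),
              (\<lambda>v. if v \<in> T then ereal (real_of_int (lev b c t T)) else snd (st t) v))"
      unfolding cover_step_def by blast
    then have "P t T" unfolding P_def by blast
    then show ?thesis by blast
  qed simp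
  obtain T where T0: "\<And>t. t < n \<Longrightarrow> P t (T t)"
  proof -
    have "\<forall>t. \<exists>T. t < n \<longrightarrow> P t T" using ex by blast
    from choice[OF this] show ?thesis using that by blast
  qed
  have T: "T t \<subseteq> es ! t \<and> effective b c t (snd (st t)) (T t) \<and>
        st (Suc t) = ((\<lambda>v. if v \<in> T t then Some t else fst (st t) v),
              (\<lambda>v. if v \<in> T t then ereal (real_of_int (lev b c t (T t))) else snd (st t) v))"
    if "t < n" for t
    using T0[OF that] unfolding P_def .
  define lv where "lv t = lev b c t (T t)" for t
  have TV: "T t \<subseteq> V" if "t < n" for t using T[OF that] edges[OF that] by blast
  have eid_step: "fst (st (Suc t)) v = (if v \<in> T t then Some t else fst (st t) v)" if "t < n" for t v
    using T[OF that] by simp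
  have eff_step: "snd (st (Suc t)) v = (if v \<in> T t then ereal (real_of_int (lv t)) else snd (st t) v)"
    if "t < n" for t v
    using T[OF that] by (simp add: lv_def)
  have eff_gt: "ereal (real_of_int (lv t)) > snd (st t) v" if "t < n" "v \<in> T t" for t v
    using T[OF that(1)] that(2) unfolding effective_def lv_def by blast
  have mono: "snd (st t) v \<le> snd (st k) v" if "t \<le> k" "k \<le> n" for t k v
    using that
  proof (induction k)
    case 0 then show ?case by simp
  next
    case (Suc k)
    show ?case
    proof (cases "t = Suc k")
      case False
      then have "snd (st t) v \<le> snd (st k) v" using Suc by auto
      also have "\<dots> \<le> snd (st (Suc k)) v"
        using eff_step[of k v] eff_gt[of k v] Suc.prems by (auto simp: less_imp_le)
      finally show ?thesis .
    qed simp
  qed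
  have I2: "ereal (real_of_int (lv t)) \<le> snd (st k) v" if "t < k" "k \<le> n" "v \<in> T t" for t k v
    using eff_step[of t v] mono[of "Suc t" k v] that by auto
  have inc: "lv t1 < lv t2" if "t1 < t2" "t2 < n" "v \<in> T t1" "v \<in> T t2" for t1 t2 v
  proof -
    have "ereal (real_of_int (lv t1)) < ereal (real_of_int (lv t2))"
    proof (rule le_less_trans)
      show "ereal (real_of_int (lv t1)) \<le> snd (st t2) v" using I2[of t1 t2 v] that by simp
      show "snd (st t2) v < ereal (real_of_int (lv t2))" using eff_gt[of t2 v] that by simp
    qed
    then show ?thesis by simp
  qed
  have I1: "t < k \<and> v \<in> T t \<and> snd (st k) v = ereal (real_of_int (lv t))"
    if "k \<le> n" "fst (st k) v = Some t" for k v t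
    using that
  proof (induction k)
    case 0 then show ?case using st0 by (simp add: cover_init_def)
  next
    case (Suc k)
    then show ?case using eid_step[of k v] eff_step[of k v] by (auto split: if_splits)
  qed
  define A where "A = {t. t < n \<and> T t \<noteq> {} \<and> lv t > r}"
  have finA: "finite A" unfolding A_def by simp
  have SA: "S_gt V es (st n) r \<subseteq> A"
  proof
    fix t assume "t \<in> S_gt V es (st n) r"
    then obtain v where v: "t < n" "v \<in> V" "snd (st n) v > ereal (real_of_int r)" "fst (st n) v = Some t"
      unfolding S_gt_def n_def by auto
    from I1[OF _ v(4)] have "v \<in> T t" "snd (st n) v = ereal (real_of_int (lv t))" by auto
    with v show "t \<in> A" unfolding A_def by auto
  qed
  define bR where "bR v = real_of_rat (b v)" for v
  define cR where "cR t = real_of_rat (c t)" for t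
  define d where "d t = nat (lv t - r - 1)" for t
  have cpos: "cR t > 0" if "t < n" for t using edges[OF that] by (simp add: cR_def)
  have bRpos: "bR v > 0" if "v \<in> V" for v using bpos[OF that] by (simp add: bR_def)
  have key: "2 powr r * cR t < (\<Sum>v\<in>T t. bR v) * (1/2)^(d t)" if "t \<in> A" for t
  proof -
    have t: "t < n" "T t \<noteq> {}" "lv t > r" using that unfolding A_def by auto
    have finT: "finite (T t)" using TV[OF t(1)] finV finite_subset by blast
    have Bpos: "(\<Sum>v\<in>T t. bR v) > 0"
      using t(2) finT TV[OF t(1)] bRpos by (intro sum_pos) auto
    have L: "lv t = \<lceil>log 2 ((\<Sum>v\<in>T t. bR v) / cR t)\<rceil>"
      unfolding lv_def lev_def bR_def cR_def by (simp add: of_rat_divide of_rat_sum)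
    have lb: "cR t * 2 powr (real_of_int (lv t) - 1) < (\<Sum>v\<in>T t. bR v)"
      by (rule lev_bound[OF Bpos cpos[OF t(1)] L])
    have "real_of_int (lv t) - 1 = real_of_int r + real (d t)" using t(3) by (simp add: d_def)
    then have "2 powr (real_of_int (lv t) - 1) = 2 powr r * 2 ^ d t"
      by (simp add: powr_add powr_realpow)
    with lb have "cR t * (2 powr r * 2 ^ d t) < (\<Sum>v\<in>T t. bR v)" by simp
    then show ?thesis by (simp add: field_simps power_divide)
  qed
  have main: "(\<Sum>t\<in>A. (\<Sum>v\<in>T t. bR v) * (1/2)^(d t)) \<le> 2 * (\<Sum>v\<in>V. bR v)"
  proof -
    have "(\<Sum>t\<in>A. (\<Sum>v\<in>T t. bR v) * (1/2)^(d t)) = (\<Sum>t\<in>A. \<Sum>v\<in>{v. v \<in> V \<and> v \<in> T t}. bR v * (1/2)^(d t))"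
    proof (rule sum.cong)
      fix t assume "t \<in> A"
      then have "{v. v \<in> V \<and> v \<in> T t} = T t" using TV unfolding A_def by auto
      then show "(\<Sum>v\<in>T t. bR v) * (1/2)^(d t) = (\<Sum>v\<in>{v. v \<in> V \<and> v \<in> T t}. bR v * (1/2)^(d t))"
        by (simp add: sum_distrib_right)
    qed simp
    also have "\<dots> = (\<Sum>v\<in>V. \<Sum>t\<in>{t. t \<in> A \<and> v \<in> T t}. bR v * (1/2)^(d t))"
      by (rule sum.swap_restrict[OF finA finV])
    also have "\<dots> = (\<Sum>v\<in>V. bR v * (\<Sum>t\<in>{t. t \<in> A \<and> v \<in> T t}. (1/2)^(d t)))"
      by (simp add: sum_distrib_left)
    also have "\<dots> \<le> (\<Sum>v\<in>V. bR v * 2)"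
    proof (rule sum_mono)
      fix v assume v: "v \<in> V"
      define Av where "Av = {t. t \<in> A \<and> v \<in> T t}"
      have finAv: "finite Av" unfolding Av_def using finA by simp
      have inj: "inj_on d Av"
      proof (rule inj_onI)
        fix t1 t2 assume h: "t1 \<in> Av" "t2 \<in> Av" "d t1 = d t2"
        have r1: "lv t1 > r" "lv t2 > r" "t1 < n" "t2 < n" "v \<in> T t1" "v \<in> T t2"
          using h unfolding Av_def A_def by auto
        have "lv t1 = lv t2" using h(3) r1 unfolding d_def by simp
        then show "t1 = t2" using inc r1
          by (metis less_irrefl linorder_neqE_nat)
      qed
      have "(\<Sum>t\<in>Av. (1/2::real)^(d t)) = (\<Sum>k\<in>d ` Av. (1/2)^k)"
        by (simp add: sum.reindex[OF inj])
      also have "\<dots> \<le> 2" by (rule geom_le2) (simp add: finAv)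
      finally show "bR v * (\<Sum>t\<in>{t. t \<in> A \<and> v \<in> T t}. (1/2)^(d t)) \<le> bR v * 2"
        using bRpos[OF v] unfolding Av_def by simp
    qed
    finally show ?thesis by (simp add: sum_distrib_right mult.commute)
  qed
  have Bpos: "(\<Sum>v\<in>V. bR v) > 0" using finV Vne bRpos by (intro sum_pos) auto
  have strict: "2 powr r * (\<Sum>t\<in>S_gt V es (st n) r. cR t) < 2 * (\<Sum>v\<in>V. bR v)"
  proof (cases "A = {}")
    case True
    then have "S_gt V es (st n) r = {}" using SA by auto
    then show ?thesis using Bpos by simp
  next
    case False
    have "(\<Sum>t\<in>S_gt V es (st n) r. cR t) \<le> (\<Sum>t\<in>A. cR t)"
      using SA finA cpos unfolding A_def by (intro sum_mono2) (auto simp: less_imp_le)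
    then have le: "2 powr r * (\<Sum>t\<in>S_gt V es (st n) r. cR t) \<le> 2 powr r * (\<Sum>t\<in>A. cR t)"
      by simp
    have "2 powr r * (\<Sum>t\<in>A. cR t) = (\<Sum>t\<in>A. 2 powr r * cR t)" by (simp add: sum_distrib_left)
    also have "\<dots> < (\<Sum>t\<in>A. (\<Sum>v\<in>T t. bR v) * (1/2)^(d t))"
      using key finA False by (intro sum_strict_mono) auto
    finally have "2 powr r * (\<Sum>t\<in>A. cR t) < (\<Sum>t\<in>A. (\<Sum>v\<in>T t. bR v) * (1/2)^(d t))" .
    also have "\<dots> \<le> 2 * (\<Sum>v\<in>V. bR v)" by (rule main)
    finally show ?thesis using le by linarith
  qed
  have eq1: "real_of_rat (\<Sum>t\<in>S_gt V es (st n) r. c t) = (\<Sum>t\<in>S_gt V es (st n) r. cR t)"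
    by (simp add: cR_def of_rat_sum)
  have eq2: "real_of_rat (sum b V) = (\<Sum>v\<in>V. bR v)" by (simp add: bR_def of_rat_sum)
  have p: "2 powr (real_of_int r - 1) = 2 powr r / 2" by (simp add: powr_diff)
  have pp: "(2::real) powr r > 0" by simp
  from strict pp have "(\<Sum>t\<in>S_gt V es (st n) r. cR t) < 2 * (\<Sum>v\<in>V. bR v) / 2 powr r"
    by (simp add: field_simps)
  moreover have "(\<Sum>v\<in>V. bR v) / (2 powr r / 2) = 2 * (\<Sum>v\<in>V. bR v) / 2 powr r" by simp
  ultimately have "real_of_rat (\<Sum>t\<in>S_gt V es (st n) r. c t) < real_of_rat (sum b V) / 2 powr (real_of_int r - 1)"
    unfolding eq1 eq2 p by (simp add: mult.commute)
  then show ?thesis by (simp add: n_def)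
qed

end
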